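(* Let $n$ be a positive odd integer and let $a$ be any integer. Let $q\neq 1$ be a positive real number, and define the $n\times n$ matrix $$Q=\left[q^{-\{\frac{aj-(a+1)k}{n}\}}\right]_{1\leqslant j,k\leqslant n}.$$ Then $$\det(Q)=\left(\frac{a(a+1)}{n}\right)(1-q^{-1})^{n-1}.$$ Moreover, when $\gcd(a(a+1),n)=1$, $$Q^{-1}=\frac{1}{1-q^{-1}}[f(j,k)]_{1\leqslant j,k\leqslant n},$$ where $$f(j,k)=[\![\,n\mid(a+1)j-ak\,]\!]-q^{-1/n}[\![\,n\mid (a+1)j-ak-1\,]\!].$$
   Context: For a real number $x$, $\{x\}=x-\lfloor x\rfloor$ is its fractional part. For a statement $S$, $[\![S]\!]$ equals $1$ if $S$ holds and $0$ otherwise. $q^{-1/n}$ denotes the positive real $n$th root of $q^{-1}$. $\left(\frac{\cdot}{n}\right)$ denotes the Jacobi symbol modulo the positive odd integer $n$ (equal to $0$ when the argument is not coprime to $n$, and $\left(\frac{\cdot}{1}\right)=1$). *)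

theory Defs
  imports "Jordan_Normal_Form.Determinant" "HOL-Number_Theory.Residues"
begin

definition jacobi :: "int \<Rightarrow> nat \<Rightarrow> int" where
  "jacobi a n = (\<Prod>p\<in>prime_factors n. Legendre a (int p) ^ multiplicity p n)"

text \<open>The matrix Q, 0-indexed: entry (j,k) corresponds to (j+1,k+1) of the paper.\<close>
definition Qmat :: "nat \<Rightarrow> int \<Rightarrow> real \<Rightarrow> real mat" where
  "Qmat n a q = mat n n (\<lambda>(j,k).
     q powr (- frac (real_of_int (a * int (j+1) - (a+1) * int (k+1)) / real n)))"

definition fent :: "nat \<Rightarrow> int \<Rightarrow> real \<Rightarrow> nat \<Rightarrow> nat \<Rightarrow> real" where
  "fent n a q j k =
     of_bool (int n dvd (a+1) * int j - a * int k)
     - q powr (- 1 / real n) * of_bool (int n dvd (a+1) * int j - a * int k - 1)"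

definition Qinv :: "nat \<Rightarrow> int \<Rightarrow> real \<Rightarrow> real mat" where
  "Qinv n a q = (1 / (1 - 1 / q)) \<cdot>\<^sub>m mat n n (\<lambda>(j,k). fent n a q (j+1) (k+1))"

end

theory Submission
  imports Defs "HOL-Number_Theory.Euler_Criterion"
begin



definition vprod :: "nat \<Rightarrow> (nat \<Rightarrow> int) \<Rightarrow> int" where
  "vprod n y = (\<Prod>(i,j)\<in>{(i,j). i < j \<and> j < n}. y j - y i)"

lemma finite_pairs: "finite {(i,j). i < j \<and> j < (n::nat)}"
  by (rule finite_subset[of _ "{..<n} \<times> {..<n}"]) auto

lemma vprod_adj:
  assumes "Suc k < n"
  shows "vprod n (z \<circ> Transposition.transpose k (Suc k)) = - vprod n z"
proof -
  let ?t = "Transposition.transpose k (Suc k)"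
  let ?P = "{(i,j). i < j \<and> j < n}"
  let ?P' = "?P - {(k, Suc k)}"
  let ?g = "\<lambda>(i,j). z j - z i"
  define phi where "phi = (\<lambda>(i::nat,j::nat). (?t i, ?t j))"
  have fin: "finite ?P'" using finite_pairs[of n] by auto
  have kin: "(k, Suc k) \<in> ?P" using assms by auto
  have ord: "?t i < ?t j" if "i < j" "j < n" "(i,j) \<noteq> (k, Suc k)" for i j
    using that by (auto simp: Transposition.transpose_def)
  have tn: "?t i < n" if "i < n" for i using that assms by (auto simp: Transposition.transpose_def)
  have tt: "?t (?t i) = i" for i by (simp add: Transposition.transpose_def)
  have phiP: "phi x \<in> ?P'" if "x \<in> ?P'" for x
  proof -
    obtain i j where x: "x = (i,j)" by fastforce
    have "i < j" "j < n" "(i,j) \<noteq> (k, Suc k)" using that x by auto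
    hence "?t i < ?t j" "?t j < n" using ord tn by auto
    moreover have "(?t i, ?t j) \<noteq> (k, Suc k)"
      using \<open>(i,j) \<noteq> (k, Suc k)\<close> \<open>i < j\<close> by (auto simp: Transposition.transpose_def split: if_splits)
    ultimately show ?thesis using x phi_def by auto
  qed
  have phiphi: "phi (phi x) = x" for x
    by (cases x) (simp add: phi_def tt)
  have bij: "bij_betw phi ?P' ?P'"
  proof (rule bij_betw_byWitness[where f'=phi])
    show "\<forall>a\<in>?P'. phi (phi a) = a" using phiphi by blast
    show "\<forall>a\<in>?P'. phi (phi a) = a" using phiphi by blast
    show "phi ` ?P' \<subseteq> ?P'" by (rule image_subsetI) (rule phiP)
    show "phi ` ?P' \<subseteq> ?P'" by (rule image_subsetI) (rule phiP)
  qed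
  have "vprod n (z \<circ> ?t) = (\<Prod>x\<in>?P. ?g (phi x))"
    unfolding vprod_def phi_def by (intro prod.cong) auto
  also have "\<dots> = ?g (phi (k, Suc k)) * (\<Prod>x\<in>?P'. ?g (phi x))"
    by (rule prod.remove[OF finite_pairs kin])
  also have "(\<Prod>x\<in>?P'. ?g (phi x)) = (\<Prod>x\<in>?P'. ?g x)"
    by (rule prod.reindex_bij_betw[OF bij])
  also have "?g (phi (k, Suc k)) = - ?g (k, Suc k)"
    by (simp add: phi_def)
  also have "- ?g (k, Suc k) * (\<Prod>x\<in>?P'. ?g x) = - (\<Prod>x\<in>?P. ?g x)"
    using prod.remove[OF finite_pairs kin, of ?g] by (simp add: algebra_simps)
  finally show ?thesis unfolding vprod_def .
qed

lemma vprod_adj_seq: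
  assumes "\<forall>x\<in>set xs. Suc x < n"
  shows "vprod n (z \<circ> apply_adj_transps xs) = (-1) ^ length xs * vprod n z"
  using assms
proof (induction xs arbitrary: z)
  case Nil
  then show ?case by simp
next
  case (Cons x xs)
  have "vprod n (z \<circ> apply_adj_transps (x # xs))
      = vprod n ((z \<circ> Transposition.transpose x (x+1)) \<circ> apply_adj_transps xs)"
    by (simp add: o_assoc)
  also have "\<dots> = (-1) ^ length xs * vprod n (z \<circ> Transposition.transpose x (x+1))"
    using Cons.prems Cons.IH[of "z \<circ> Transposition.transpose x (x+1)"] by (simp add: o_def)
  also have "\<dots> = (-1) ^ length (x # xs) * vprod n z"
    using Cons.prems vprod_adj[of x n z] by simp
  finally show ?case .
qed

lemma vprod_transpose:
  assumes "a < n" "b < n" "a \<noteq> b"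
  shows "vprod n (z \<circ> Transposition.transpose a b) = - vprod n z"
proof -
  have main: "vprod n (z \<circ> Transposition.transpose a b) = - vprod n z" if "a < b" "b < n" for a b
  proof -
    have "vprod n (z \<circ> Transposition.transpose a b) = vprod n (z \<circ> apply_adj_transps (adj_transp_seq a b))"
      using adj_transp_seq_correct[OF that(1)] by simp
    also have "\<dots> = (-1) ^ length (adj_transp_seq a b) * vprod n z"
      by (rule vprod_adj_seq) (use that set_adj_transp_seq[OF that(1)] in auto)
    also have "length (adj_transp_seq a b) = 2 * (b - a) - 1"
      using length_adj_transp_seq[OF that(1)] .
    also have "(-1::int) ^ (2 * (b - a) - 1) = -1"
      using that(1) by (simp add: odd_pos)
    finally show ?thesis by (simp add: o_def)
  qed
  show ?thesis
  proof (cases "a < b")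
    case True then show ?thesis using main assms by blast
  next
    case False
    hence "b < a" using assms by auto
    have "Transposition.transpose a b = Transposition.transpose b a" by (rule transpose_commute)
    then show ?thesis using main[of b a] assms \<open>b < a\<close> by (simp add: o_def)
  qed
qed

lemma vprod_perm:
  assumes "p permutes {0..<n}"
  shows "vprod n (z \<circ> p) = sign p * vprod n z"
  using assms(1) finite_atLeastLessThan
proof (induction arbitrary: z rule: permutes_induct)
  case id
  then show ?case by simp
next
  case (swap a b p)
  have "vprod n (z \<circ> (Transposition.transpose a b \<circ> p)) = vprod n ((z \<circ> Transposition.transpose a b) \<circ> p)"
    by (simp add: o_assoc)
  also have "\<dots> = sign p * vprod n (z \<circ> Transposition.transpose a b)" using swap.IH by blast
  also have "\<dots> = - sign p * vprod n z" using vprod_transpose[of a n b z] swap by simp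
  also have "- sign p = sign (Transposition.transpose a b \<circ> p)"
  proof -
    have "permutation p" using swap(4) permutes_imp_permutation by blast
    then show ?thesis by (simp add: sign_compose[OF permutation_swap_id] sign_swap_id swap(3))
  qed
  finally show ?case .
qed




definition mulperm :: "nat \<Rightarrow> int \<Rightarrow> int \<Rightarrow> nat \<Rightarrow> nat" where
  "mulperm n c t x = (if x < n then nat ((c * int x + t) mod int n) else x)"

lemma mulperm_lt: "x < n \<Longrightarrow> mulperm n c t x < n"
  unfolding mulperm_def by (simp add: nat_less_iff)

lemma mulperm_permutes:
  assumes "coprime c (int n)"
  shows "mulperm n c t permutes {0..<n}"
proof (rule bij_imp_permutes)
  have inj: "inj_on (mulperm n c t) {0..<n}"
  proof (rule inj_onI)
    fix x y assume xy: "x \<in> {0..<n}" "y \<in> {0..<n}" "mulperm n c t x = mulperm n c t y"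
    have n: "int n > 0" using xy by auto
    hence "(c * int x + t) mod int n = (c * int y + t) mod int n"
      using xy unfolding mulperm_def by (simp add: eq_nat_nat_iff)
    hence "[c * int x + t = c * int y + t] (mod int n)" by (simp add: cong_def)
    hence "[c * int x = c * int y] (mod int n)" by (simp add: cong_add_rcancel)
    hence "[int x = int y] (mod int n)" using cong_mult_lcancel[OF assms] by blast
    hence "int x mod int n = int y mod int n" by (simp add: cong_def)
    thus "x = y" using xy by simp
  qed
  have sub: "mulperm n c t ` {0..<n} \<subseteq> {0..<n}" using mulperm_lt by auto
  show "bij_betw (mulperm n c t) {0..<n} {0..<n}"
    unfolding bij_betw_def using inj endo_inj_surj[OF _ sub inj] by simp
  show "\<And>x. x \<notin> {0..<n} \<Longrightarrow> mulperm n c t x = x" unfolding mulperm_def by simp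
qed

lemma mulperm_compose:
  "mulperm n a s \<circ> mulperm n c t = mulperm n (a * c) (a * t + s)"
proof
  fix x
  show "(mulperm n a s \<circ> mulperm n c t) x = mulperm n (a * c) (a * t + s) x"
  proof (cases "x < n")
    case True
    have "n > 0" using True by simp
    have "(a * ((c * int x + t) mod int n) + s) mod int n = ((a * ((c * int x + t) mod int n)) mod int n + s) mod int n"
      by (rule mod_add_left_eq[symmetric])
    also have "(a * ((c * int x + t) mod int n)) mod int n = (a * (c * int x + t)) mod int n"
      by (rule mod_mult_right_eq)
    also have "((a * (c * int x + t)) mod int n + s) mod int n = (a * (c * int x + t) + s) mod int n"
      by (rule mod_add_left_eq)
    finally have eq: "(a * ((c * int x + t) mod int n) + s) mod int n = (a * (c * int x + t) + s) mod int n" .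
    have "(mulperm n a s \<circ> mulperm n c t) x = nat ((a * ((c * int x + t) mod int n) + s) mod int n)"
      using True mulperm_lt[OF True] by (simp add: mulperm_def)
    also have "\<dots> = mulperm n (a * c) (a * t + s) x"
      unfolding eq using True by (simp add: mulperm_def algebra_simps)
    finally show ?thesis .
  next
    case False
    then show ?thesis by (simp add: mulperm_def)
  qed
qed

lemma mulperm_mod: "mulperm n c t = mulperm n c (t mod int n)"
  unfolding mulperm_def by (auto simp: fun_eq_iff mod_add_right_eq)

lemma mulperm_mod_c: "mulperm n c t = mulperm n (c mod int n) t"
proof -
  have "(c * int x + t) mod int n = (c mod int n * int x + t) mod int n" for x
  proof -
    have "(c * int x + t) mod int n = ((c * int x) mod int n + t) mod int n" by (rule mod_add_left_eq[symmetric])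
    also have "(c * int x) mod int n = (c mod int n * int x) mod int n" by (rule mod_mult_left_eq[symmetric])
    also have "((c mod int n * int x) mod int n + t) mod int n = (c mod int n * int x + t) mod int n" by (rule mod_add_left_eq)
    finally show ?thesis .
  qed
  thus ?thesis unfolding mulperm_def by (auto simp: fun_eq_iff)
qed

lemma sign_shift1:
  assumes "n > 0"
  shows "sign (mulperm n 1 1) = (-1) ^ (n - 1)"
  using assms
proof (induction n rule: nat_induct_non_zero)
  case 1
  have "mulperm 1 1 1 = id" by (auto simp: mulperm_def fun_eq_iff)
  then show ?case by simp
next
  case (Suc n)
  have eq: "mulperm (Suc n) 1 1 = Transposition.transpose 0 n \<circ> mulperm n 1 1"
  proof
    fix x
    show "mulperm (Suc n) 1 1 x = (Transposition.transpose 0 n \<circ> mulperm n 1 1) x"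
    proof (cases "x < n - 1")
      case True
      hence "int x + 1 < int n" by simp
      then show ?thesis using True Suc.hyps
        by (simp add: mulperm_def Transposition.transpose_def)
    next
      case False
      then consider "x = n - 1" | "x = n" | "x > n" by linarith
      then show ?thesis
      proof cases
        case 1
        then show ?thesis using Suc.hyps
          by (simp add: mulperm_def Transposition.transpose_def of_nat_diff)
      next
        case 2
        then show ?thesis using Suc.hyps
          by (simp add: mulperm_def Transposition.transpose_def add.commute)
      next
        case 3
        then show ?thesis
          by (simp add: mulperm_def Transposition.transpose_def)
      qed
    qed
  qed
  have perm: "permutation (mulperm n 1 1)"
    using mulperm_permutes[of 1 n 1] permutes_imp_permutation by auto
  have "sign (mulperm (Suc n) 1 1) = sign (Transposition.transpose 0 n) * sign (mulperm n 1 1)"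
    unfolding eq by (rule sign_compose[OF permutation_swap_id perm])
  also have "\<dots> = (-1) ^ (Suc n - 1)"
    using Suc by (cases n) (auto simp: sign_swap_id)
  finally show ?case .
qed

lemma mulperm_shift_pow: "mulperm n 1 (int k) = (mulperm n 1 1) ^^ k"
proof (induction k)
  case 0
  then show ?case by (auto simp: mulperm_def fun_eq_iff)
next
  case (Suc k)
  have "mulperm n 1 (int (Suc k)) = mulperm n 1 1 \<circ> mulperm n 1 (int k)"
    by (simp add: mulperm_compose add.commute)
  then show ?case using Suc by (simp add: funpow_Suc_right funpow_swap1)
qed

lemma sign_funpow:
  assumes "permutation p"
  shows "sign (p ^^ k) = sign p ^ k"
proof -
  have "permutation (p ^^ k) \<and> sign (p ^^ k) = sign p ^ k"
  proof (induction k)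
    case 0
    then show ?case by (simp add: permutation_id)
  next
    case (Suc k)
    have "sign (p ^^ Suc k) = sign (p \<circ> p ^^ k)" by simp
    also have "\<dots> = sign p * sign (p ^^ k)"
      using sign_compose[OF assms] Suc by blast
    finally show ?case using Suc permutation_compose[OF assms] by (simp del: comp_apply)
  qed
  thus ?thesis by simp
qed

lemma sign_translation:
  assumes "odd n"
  shows "sign (mulperm n 1 t) = 1"
proof -
  have n: "n > 0" using assms by (auto intro: odd_pos)
  have "mulperm n 1 t = mulperm n 1 (int (nat (t mod int n)))"
    using mulperm_mod[of n 1 t] n by simp
  also have "\<dots> = (mulperm n 1 1) ^^ nat (t mod int n)" by (rule mulperm_shift_pow)
  moreover have perm: "permutation (mulperm n 1 1)"
    using mulperm_permutes[of 1 n 1] permutes_imp_permutation by auto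
  ultimately have "sign (mulperm n 1 t) = sign (mulperm n 1 1) ^ nat (t mod int n)"
    using sign_funpow[OF perm] by simp
  also have "sign (mulperm n 1 1) = 1" using sign_shift1[OF n] assms n by (simp add: even_diff_nat)
  finally show ?thesis by simp
qed

lemma sign_affine:
  assumes "odd n" "coprime c (int n)"
  shows "sign (mulperm n c t) = sign (mulperm n c 0)"
proof -
  have "mulperm n c t = mulperm n 1 t \<circ> mulperm n c 0" by (simp add: mulperm_compose)
  hence "sign (mulperm n c t) = sign (mulperm n 1 t) * sign (mulperm n c 0)"
  proof -
    have "permutation (mulperm n 1 t)"
      using mulperm_permutes[of 1 n t] permutes_imp_permutation by auto
    moreover have "permutation (mulperm n c 0)"
      using mulperm_permutes[OF assms(2), of 0] permutes_imp_permutation by auto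
    ultimately show ?thesis unfolding \<open>mulperm n c t = _\<close> by (rule sign_compose)
  qed
  thus ?thesis using sign_translation[OF assms(1)] by simp
qed




lemma card_pairs: "2 * card {(i,j). i < j \<and> j < (n::nat)} = n * (n - 1)"
proof (induction n)
  case 0
  then show ?case by simp
next
  case (Suc n)
  have eq: "{(i,j). i < j \<and> j < Suc n} = {(i,j). i < j \<and> j < n} \<union> (\<lambda>i. (i,n)) ` {..<n}"
    by auto
  have disj: "{(i,j). i < j \<and> j < n} \<inter> (\<lambda>i. (i,n)) ` {..<n} = {}" by auto
  have "card {(i,j). i < j \<and> j < Suc n} = card {(i,j). i < j \<and> j < n} + card ((\<lambda>i. (i,n)) ` {..<n})"
    unfolding eq by (rule card_Un_disjoint[OF finite_pairs _ disj]) simp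
  also have "card ((\<lambda>i. (i,n)) ` {..<n}) = n" by (simp add: card_image inj_on_def)
  finally show ?case using Suc by (cases n) (auto simp: algebra_simps)
qed

lemma legendre_pm1:
  assumes "prime p" "coprime c (int p)"
  shows "Legendre c (int p) = 1 \<or> Legendre c (int p) = -1"
proof -
  have "\<not> [c = 0] (mod int p)"
  proof
    assume "[c = 0] (mod int p)"
    hence "int p dvd c" by (simp add: cong_0_iff)
    hence "int p dvd gcd c (int p)" by simp
    with assms show False by (simp add: prime_gt_1_nat)
  qed
  thus ?thesis unfolding Legendre_def by auto
qed

lemma sign_prime:
  assumes p: "prime p" "odd p" and cop: "coprime c (int p)"
  shows "sign (mulperm p c 0) = Legendre c (int p)"
proof -
  let ?s = "mulperm p c 0"
  let ?P = "{(i,j). i < j \<and> j < p}"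
  let ?V = "vprod p int"
  define N where "N = card ?P"
  have p2: "p > 2" using p by (metis dvd_refl le_neq_implies_less prime_ge_2_nat)
  have perm: "?s permutes {0..<p}" using mulperm_permutes[OF cop] .
  have 1: "vprod p (int \<circ> ?s) = sign ?s * ?V" by (rule vprod_perm[OF perm])
  have "[vprod p (int \<circ> ?s) = (\<Prod>(i,j)\<in>?P. c * (int j - int i))] (mod int p)"
    unfolding vprod_def
  proof (rule cong_prod)
    fix x assume x: "x \<in> ?P"
    obtain i j where ij: "x = (i,j)" "i < j" "j < p" using x by auto
    have "[(c * int j) mod int p - (c * int i) mod int p = c * int j - c * int i] (mod int p)"
      by (simp add: cong_def mod_diff_eq)
    thus "[(case x of (i, j) \<Rightarrow> (int \<circ> ?s) j - (int \<circ> ?s) i) = (case x of (i, j) \<Rightarrow> c * (int j - int i))] (mod int p)"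
      using ij by (simp add: mulperm_def algebra_simps)
  qed
  also have "(\<Prod>(i,j)\<in>?P. c * (int j - int i)) = c ^ N * ?V"
    unfolding vprod_def N_def by (simp add: prod.distrib case_prod_unfold)
  finally have 2: "[sign ?s * ?V = c ^ N * ?V] (mod int p)" using 1 by (simp only:)
  have "\<not> int p dvd ?V"
  proof
    assume "int p dvd ?V"
    then obtain x where x: "x \<in> ?P" "int p dvd (case x of (i,j) \<Rightarrow> int j - int i)"
      unfolding vprod_def using prime_dvd_prod_iff[OF finite_pairs, of "int p"] p(1)
      by auto
    obtain i j where ij: "x = (i,j)" "i < j" "j < p" using x(1) by auto
    have "int j - int i > 0" "int j - int i < int p" using ij by auto
    thus False using x(2) ij zdvd_not_zless by auto
  qed
  moreover have "prime (int p)" using p(1) by simp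
  ultimately have copV: "coprime ?V (int p)"
    using prime_imp_coprime coprime_commute by blast
  have 3: "[sign ?s = c ^ N] (mod int p)"
    using 2 cong_mult_rcancel[OF copV] by blast
  have "2 * N = p * (p - 1)" unfolding N_def by (rule card_pairs)
  moreover have "even (p - 1)" using p(2) p2 by simp
  then obtain k where k: "p - 1 = 2 * k" by (rule evenE)
  ultimately have NN: "N = p * ((p - 1) div 2)" by simp
  have "[Legendre c (int p) = c ^ ((p - 1) div 2)] (mod int p)"
    by (rule euler_criterion[OF p(1) p2])
  hence "[Legendre c (int p) ^ p = (c ^ ((p - 1) div 2)) ^ p] (mod int p)" by (rule cong_pow)
  also have "(c ^ ((p - 1) div 2)) ^ p = c ^ N" unfolding NN by (simp only: power_mult[symmetric] mult.commute)
  also have "Legendre c (int p) ^ p = Legendre c (int p)"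
    using legendre_pm1[OF p(1) cop] p(2) by auto
  finally have 4: "[sign ?s = Legendre c (int p)] (mod int p)"
    using 3 by (meson cong_sym cong_trans)
  show ?thesis
  proof (rule ccontr)
    assume ne: "sign ?s \<noteq> Legendre c (int p)"
    have "sign ?s = 1 \<or> sign ?s = -1" by (simp add: sign_def)
    with ne legendre_pm1[OF p(1) cop] have d: "sign ?s - Legendre c (int p) = 2 \<or> sign ?s - Legendre c (int p) = -2"
      by auto
    have "int p dvd (sign ?s - Legendre c (int p))" using 4 by (simp add: cong_iff_dvd_diff)
    hence "int p dvd 2" using d by auto
    hence "int p \<le> 2" by (rule zdvd_imp_le) simp
    thus False using p2 by simp
  qed
qed




lemma jacobi_one: "jacobi c 1 = 1"
  unfolding jacobi_def by simp

lemma jacobi_mult_prime: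
  assumes p: "prime p" and m: "m > 0"
  shows "jacobi c (p * m) = Legendre c (int p) * jacobi c m"
proof -
  let ?S = "prime_factors (p * m)"
  let ?L = "\<lambda>q. Legendre c (int q)"
  have p0: "p \<noteq> 0" using p by auto
  have S: "?S = insert p (prime_factors m)"
    using prime_factors_product[of p m] p0 m prime_prime_factors[OF p] by auto
  have fin: "finite ?S" by simp
  have jm: "jacobi c m = (\<Prod>q\<in>?S. ?L q ^ multiplicity q m)"
    unfolding jacobi_def
  proof (rule prod.mono_neutral_left[OF fin])
    show "prime_factors m \<subseteq> ?S" using S by auto
    show "\<forall>q\<in>?S - prime_factors m. ?L q ^ multiplicity q m = 1"
    proof
      fix q assume q: "q \<in> ?S - prime_factors m"
      hence "\<not> q dvd m" using m by (auto simp: in_prime_factors_iff)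
      thus "?L q ^ multiplicity q m = 1" by (simp add: not_dvd_imp_multiplicity_0)
    qed
  qed
  have mult: "multiplicity q (p * m) = multiplicity q m + (if q = p then 1 else 0)" if q: "q \<in> ?S" for q
  proof -
    have qp: "prime q" using q by (auto simp: in_prime_factors_iff)
    have "multiplicity q (p * m) = multiplicity q p + multiplicity q m"
      using prime_elem_multiplicity_mult_distrib[of q p m] qp p0 m by auto
    moreover have "multiplicity q p = (if q = p then 1 else 0)"
      using qp p multiplicity_prime[of p] prime_multiplicity_other[of q p] by auto
    ultimately show ?thesis by simp
  qed
  have "jacobi c (p * m) = (\<Prod>q\<in>?S. ?L q ^ multiplicity q m * (if q = p then ?L q else 1))"
    unfolding jacobi_def by (rule prod.cong) (auto simp: mult)
  also have "\<dots> = jacobi c m * (\<Prod>q\<in>?S. (if q = p then ?L q else 1))"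
    unfolding jm by (rule prod.distrib)
  also have "(\<Prod>q\<in>?S. (if q = p then ?L q else 1)) = ?L p"
    using S fin by (simp add: prod.delta)
  finally show ?thesis by simp
qed

lemma jacobi_not_coprime:
  assumes n: "n > 0" and nc: "\<not> coprime c (int n)"
  shows "jacobi c n = 0"
proof -
  let ?g = "gcd c (int n)"
  have g0: "?g > 0" using n by simp
  have "?g \<noteq> 1" using nc by (simp add: coprime_iff_gcd_eq_1)
  hence "nat ?g \<noteq> 1" using g0 by simp
  then obtain q where q: "prime q" "q dvd nat ?g" using prime_factor_nat by blast
  have "int q dvd int (nat ?g)" using q(2) by (simp only: of_nat_dvd_iff)
  hence "int q dvd ?g" using g0 by simp
  hence qc: "int q dvd c" and qn: "int q dvd int n" by auto
  hence qn': "q dvd n" by simp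
  have qS: "q \<in> prime_factors n" using q(1) qn' n by (auto simp: in_prime_factors_iff)
  have "multiplicity q n > 0" using qS by (auto simp: prime_factors_multiplicity)
  moreover have "Legendre c (int q) = 0" using qc by (simp add: Legendre_def cong_0_iff)
  ultimately have "Legendre c (int q) ^ multiplicity q n = 0" by simp
  thus ?thesis unfolding jacobi_def using qS by (intro prod_zero) auto
qed

lemma sign_blocks:
  fixes g :: "nat \<Rightarrow> nat \<Rightarrow> nat" and key :: "nat \<Rightarrow> nat"
  assumes fin: "finite S" and perm: "\<And>k. k < K \<Longrightarrow> g k permutes {x\<in>S. key x = k}"
  shows "(\<lambda>x. if x \<in> S \<and> key x < K then g (key x) x else x) permutes S \<and>
         sign (\<lambda>x. if x \<in> S \<and> key x < K then g (key x) x else x) = (\<Prod>k<K. sign (g k))"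
  using perm
proof (induction K)
  case 0
  have "(\<lambda>x. if x \<in> S \<and> key x < 0 then g (key x) x else x) = id" by (auto simp: fun_eq_iff)
  then show ?case by simp
next
  case (Suc K)
  let ?H = "\<lambda>x. if x \<in> S \<and> key x < K then g (key x) x else x"
  let ?H' = "\<lambda>x. if x \<in> S \<and> key x < Suc K then g (key x) x else x"
  have IH: "?H permutes S \<and> sign ?H = (\<Prod>k<K. sign (g k))" using Suc by auto
  have gK: "g K permutes {x\<in>S. key x = K}" using Suc.prems by auto
  have gKS: "g K permutes S" by (rule permutes_subset[OF gK]) auto
  have eq: "?H' = g K \<circ> ?H"
  proof
    fix x
    show "?H' x = (g K \<circ> ?H) x"
    proof (cases "x \<in> S \<and> key x < K")
      case True
      have "g (key x) permutes {y\<in>S. key y = key x}" using Suc.prems True by auto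
      hence "g (key x) x \<in> {y\<in>S. key y = key x}" using True permutes_in_image by fastforce
      hence "g K (g (key x) x) = g (key x) x" using True by (intro permutes_not_in[OF gK]) auto
      then show ?thesis using True by simp
    next
      case False
      show ?thesis
      proof (cases "x \<in> S \<and> key x = K")
        case True
        then show ?thesis by simp
      next
        case False2: False
        have "g K x = x" using False2 by (intro permutes_not_in[OF gK]) auto
        then show ?thesis using False False2 by auto
      qed
    qed
  qed
  have "?H' permutes S" unfolding eq by (rule permutes_compose[OF _ gKS]) (use IH in auto)
  moreover have "sign ?H' = sign (g K) * sign ?H"
    unfolding eq by (rule sign_compose) (use permutes_imp_permutation[OF fin] gKS IH in auto)
  ultimately show ?case using IH by (simp add: mult.commute)
qed




lemma wreath_arith:
  fixes c :: int and m p u v :: nat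
  assumes "u < m" "m > 0" "p > 0"
  shows "(c * int (u + m * v)) mod (int m * int p)
       = (c * int u) mod int m + int m * ((c * int v + (c * int u) div int m) mod int p)"
proof -
  have e: "c * int (u + m * v) = c * int u + int m * (c * int v)" by (simp add: algebra_simps)
  have "(c * int (u + m * v)) mod (int m * int p)
      = int m * ((c * int (u + m * v)) div int m mod int p) + (c * int (u + m * v)) mod int m"
    by (rule zmod_zmult2_eq) simp
  also have "(c * int (u + m * v)) div int m = c * int v + (c * int u) div int m"
    unfolding e using assms by simp
  also have "(c * int (u + m * v)) mod int m = (c * int u) mod int m"
    unfolding e by simp
  finally show ?thesis by (simp add: algebra_simps)
qed

lemma sign_wreath:
  assumes m: "m > 0" and p: "p > 0" "odd p" and mo: "odd m"
    and cm: "coprime c (int m)" and cp: "coprime c (int p)"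
  shows "sign (mulperm (m * p) c 0) = sign (mulperm m c 0) * sign (mulperm p c 0)"
proof -
  define n where "n = m * p"
  define S where "S = {0..<n}"
  define Bt where "Bt = (\<lambda>v. {x\<in>S. x div m = v})"
  define Br where "Br = (\<lambda>u. {x\<in>S. x mod m = u})"
  define tt where "tt = (\<lambda>u::nat. (c * int u) div int m)"
  define gt where "gt = (\<lambda>v x. if x \<in> Bt v then (\<lambda>u. u + m * v) (mulperm m c 0 (x - m * v)) else x)"
  define gr where "gr = (\<lambda>u x. if x \<in> Br u then (\<lambda>v. u + m * v) (mulperm p c (tt u) (x div m)) else x)"
  define tau where "tau = (\<lambda>x. if x \<in> S \<and> x div m < p then gt (x div m) x else x)"
  define rho where "rho = (\<lambda>x. if x \<in> S \<and> x mod m < m then gr (x mod m) x else x)"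
  have finS: "finite S" unfolding S_def by simp
  have imgt: "(\<lambda>u. u + m * v) ` {0..<m} = Bt v" if v: "v < p" for v
  proof (rule subset_antisym; rule subsetI)
    fix x assume "x \<in> (\<lambda>u. u + m * v) ` {0..<m}"
    then obtain u where u0: "u \<in> {0..<m}" "x = u + m * v" by (rule imageE)
    hence u: "u < m" "x = u + m * v" by auto
    have "u + m * v < m * (v + 1)" using u by simp
    also have "\<dots> \<le> m * p" using v by (intro mult_left_mono) auto
    finally show "x \<in> Bt v" using u m unfolding Bt_def S_def n_def by auto
  next
    fix x assume "x \<in> Bt v"
    hence "x div m = v" unfolding Bt_def by auto
    hence "x = x mod m + m * v" by (metis mod_mult_div_eq add.commute)
    moreover have "x mod m < m" using m by simp
    ultimately show "x \<in> (\<lambda>u. u + m * v) ` {0..<m}" by (metis atLeastLessThan_iff image_eqI zero_le)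
  qed
  have imgr: "(\<lambda>v. u + m * v) ` {0..<p} = Br u" if u: "u < m" for u
  proof (rule subset_antisym; rule subsetI)
    fix x assume "x \<in> (\<lambda>v. u + m * v) ` {0..<p}"
    then obtain v where v0: "v \<in> {0..<p}" "x = u + m * v" by (rule imageE)
    hence v: "v < p" "x = u + m * v" by auto
    have "u + m * v < m * (v + 1)" using u by simp
    also have "\<dots> \<le> m * p" using v by (intro mult_left_mono) auto
    finally show "x \<in> Br u" using u v unfolding Br_def S_def n_def by auto
  next
    fix x assume x: "x \<in> Br u"
    hence "x mod m = u" "x < m * p" unfolding Br_def S_def n_def by auto
    hence "x = u + m * (x div m)" by (metis mod_mult_div_eq)
    moreover have "x div m < p" using \<open>x < m * p\<close> by (simp add: less_mult_imp_div_less mult.commute)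
    ultimately show "x \<in> (\<lambda>v. u + m * v) ` {0..<p}" by (metis atLeastLessThan_iff image_eqI zero_le)
  qed
  have pbt: "permutes_bij_finite (mulperm m c 0) {0..<m} (Bt v) (\<lambda>u. u + m * v) (\<lambda>x. x - m * v)"
    if v: "v < p" for v
  proof
    show "mulperm m c 0 permutes {0..<m}" by (rule mulperm_permutes[OF cm])
    show "bij_betw (\<lambda>u. u + m * v) {0..<m} (Bt v)"
      unfolding bij_betw_def using imgt[OF v] by (auto simp: inj_on_def)
    show "x + m * v - m * v = x" if "x \<in> {0..<m}" for x by simp
  qed simp
  have pbr: "permutes_bij_finite (mulperm p c (tt u)) {0..<p} (Br u) (\<lambda>v. u + m * v) (\<lambda>x. x div m)"
    if u: "u < m" for u
  proof
    show "mulperm p c (tt u) permutes {0..<p}" by (rule mulperm_permutes[OF cp])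
    show "bij_betw (\<lambda>v. u + m * v) {0..<p} (Br u)"
      unfolding bij_betw_def using imgr[OF u] m by (auto simp: inj_on_def)
    show "(u + m * x) div m = x" if "x \<in> {0..<p}" for x using that u by simp
  qed simp
  have gt_perm: "gt v permutes {x\<in>S. x div m = v}" if "v < p" for v
    using permutes_bij.permutes_p'[OF permutes_bij_finite.axioms(1)[OF pbt[OF that]]]
    unfolding gt_def Bt_def by simp
  have gt_sign: "sign (gt v) = sign (mulperm m c 0)" if "v < p" for v
    using permutes_bij_finite.sign_p'[OF pbt[OF that]] unfolding gt_def Bt_def by simp
  have gr_perm: "gr u permutes {x\<in>S. x mod m = u}" if "u < m" for u
    using permutes_bij.permutes_p'[OF permutes_bij_finite.axioms(1)[OF pbr[OF that]]]
    unfolding gr_def Br_def by simp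
  have gr_sign: "sign (gr u) = sign (mulperm p c 0)" if "u < m" for u
    using permutes_bij_finite.sign_p'[OF pbr[OF that]] sign_affine[OF p(2) cp] unfolding gr_def Br_def by simp
  have tau: "tau permutes S \<and> sign tau = (\<Prod>v<p. sign (gt v))"
    unfolding tau_def by (rule sign_blocks[OF finS gt_perm])
  have rho: "rho permutes S \<and> sign rho = (\<Prod>u<m. sign (gr u))"
    unfolding rho_def by (rule sign_blocks[OF finS gr_perm])
  have st: "sign tau = sign (mulperm m c 0)"
  proof -
    have "sign tau = sign (mulperm m c 0) ^ p" using tau gt_sign by simp
    thus ?thesis using p(2) by (cases "sign (mulperm m c 0) = 1") (auto simp: sign_def)
  qed
  have sr: "sign rho = sign (mulperm p c 0)"
  proof -
    have "sign rho = sign (mulperm p c 0) ^ m" using rho gr_sign by simp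
    thus ?thesis using mo by (cases "sign (mulperm p c 0) = 1") (auto simp: sign_def)
  qed
  have comp: "mulperm n c 0 = tau \<circ> rho"
  proof
    fix x
    show "mulperm n c 0 x = (tau \<circ> rho) x"
    proof (cases "x < n")
      case False
      then show ?thesis unfolding tau_def rho_def mulperm_def S_def by simp
    next
      case True
      define u where "u = x mod m"
      define v where "v = x div m"
      have um: "u < m" using m unfolding u_def by simp
      have xuv: "x = u + m * v" unfolding u_def v_def by simp
      have vp: "v < p" using True unfolding v_def n_def by (simp add: less_mult_imp_div_less mult.commute)
      define w where "w = mulperm p c (tt u) v"
      have wp: "w < p" unfolding w_def using mulperm_lt[OF vp] .
      have xBr: "x \<in> Br u" using True unfolding Br_def S_def u_def by simp
      have rx: "rho x = u + m * w"
        using xBr True um unfolding rho_def gr_def w_def v_def S_def by (simp add: u_def)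
      have yS: "u + m * w \<in> Bt w" using imgt[OF wp] um by auto
      hence ydiv: "(u + m * w) div m = w" and yS': "u + m * w \<in> S" unfolding Bt_def by auto
      have "tau (u + m * w) = mulperm m c 0 u + m * w"
        using yS yS' wp ydiv unfolding tau_def gt_def by simp
      also have "\<dots> = nat ((c * int u) mod int m) + m * nat ((c * int v + tt u) mod int p)"
        using um vp unfolding w_def mulperm_def by simp
      also have "\<dots> = nat ((c * int x) mod int n)"
      proof -
        have "int (nat ((c * int u) mod int m) + m * nat ((c * int v + tt u) mod int p))
            = (c * int u) mod int m + int m * ((c * int v + tt u) mod int p)"
          using m p by simp
        also have "\<dots> = (c * int x) mod int n"
          unfolding xuv n_def tt_def using wreath_arith[OF um m p(1)] by simp
        finally show ?thesis by linarith
      qed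
      finally show ?thesis using rx True unfolding mulperm_def by simp
    qed
  qed
  have "sign (mulperm n c 0) = sign tau * sign rho"
    unfolding comp by (rule sign_compose) (use tau rho permutes_imp_permutation[OF finS] in auto)
  thus ?thesis using st sr unfolding n_def by simp
qed

theorem sign_mulperm:
  assumes "odd n" "coprime c (int n)"
  shows "sign (mulperm n c t) = jacobi c n"
  using assms
proof (induction n arbitrary: t rule: less_induct)
  case (less n)
  have n0: "n > 0" using less.prems by (auto intro: odd_pos)
  have "sign (mulperm n c t) = sign (mulperm n c 0)" by (rule sign_affine[OF less.prems])
  also have "\<dots> = jacobi c n"
  proof (cases "n = 1")
    case True
    have "mulperm 1 c 0 = id" by (auto simp: mulperm_def fun_eq_iff)
    then show ?thesis using True by (simp add: jacobi_def)
  next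
    case False
    then obtain p where p: "prime p" "p dvd n" using prime_factor_nat by blast
    define m where "m = n div p"
    have nm: "n = p * m" unfolding m_def using p(2) by simp
    have m0: "m > 0" using n0 nm by (auto intro: gr0I)
    have p0: "p > 0" using p(1) prime_gt_0_nat by blast
    have p1: "p > 1" using p(1) prime_gt_1_nat by blast
    have mn: "m < n" using nm m0 p1 by simp
    have po: "odd p" "odd m" using less.prems(1) nm by auto
    have cop: "coprime c (int p)" "coprime c (int m)" using less.prems(2) nm by auto
    have "sign (mulperm n c 0) = sign (mulperm m c 0) * sign (mulperm p c 0)"
      using sign_wreath[OF m0 p0 po(1) po(2) cop(2) cop(1)] nm by (simp add: mult.commute)
    also have "sign (mulperm m c 0) = jacobi c m" using less.IH[OF mn po(2) cop(2)] .
    also have "sign (mulperm p c 0) = Legendre c (int p)" by (rule sign_prime[OF p(1) po(1) cop(1)])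
    also have "jacobi c m * Legendre c (int p) = jacobi c n"
      using jacobi_mult_prime[OF p(1) m0] nm by simp
    finally show ?thesis .
  qed
  finally show ?case .
qed




definition Gf :: "nat \<Rightarrow> real \<Rightarrow> int \<Rightarrow> real" where
  "Gf n w x = w ^ nat (x mod int n)"

lemma Gf_mod: "x mod int n = y mod int n \<Longrightarrow> Gf n w x = Gf n w y"
  unfolding Gf_def by simp

lemma Gf_step:
  assumes "n > 0"
  shows "Gf n w x - w * Gf n w (x - 1) = (if x mod int n = 0 then 1 - w ^ n else 0)"
proof (cases "x mod int n = 0")
  case True
  have "(x - 1) mod int n = int n - 1"
  proof -
    have "(x - 1) mod int n = (x mod int n - 1) mod int n" by (simp add: mod_diff_left_eq)
    also have "\<dots> = (-1) mod int n" using True by simp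
    also have "\<dots> = int n - 1" using assms by (simp add: zmod_minus1)
    finally show ?thesis .
  qed
  hence "nat ((x - 1) mod int n) = n - 1" by simp
  hence "w * Gf n w (x - 1) = w ^ n" unfolding Gf_def using assms
    by (simp add: power_Suc[symmetric])
  then show ?thesis using True by (simp add: Gf_def)
next
  case False
  have pos: "x mod int n > 0" using False assms
    by (metis less_le pos_mod_sign of_nat_0_less_iff)
  have "(x - 1) mod int n = x mod int n - 1"
  proof -
    have "(x - 1) mod int n = (x mod int n - 1) mod int n" by (simp add: mod_diff_left_eq)
    also have "\<dots> = x mod int n - 1"
    proof (rule mod_pos_pos_trivial)
      have "x mod int n < int n" using assms by simp
      thus "x mod int n - 1 < int n" by linarith
    qed (use pos in simp)
    finally show ?thesis .
  qed
  hence "nat (x mod int n) = Suc (nat ((x - 1) mod int n))" using pos by simp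
  hence "Gf n w x = w * Gf n w (x - 1)" unfolding Gf_def by simp
  then show ?thesis using False by simp
qed

lemma frac_div_int:
  assumes "n > 0"
  shows "frac (real_of_int X / real n) = real_of_int (X mod int n) / real n"
proof -
  have "X = int n * (X div int n) + X mod int n" by simp
  hence "real_of_int X / real n = real_of_int (X mod int n) / real n + of_int (X div int n)"
    using assms by (smt (verit) add_divide_distrib nonzero_mult_div_cancel_left of_int_add of_int_mult of_int_of_nat_eq of_nat_0_less_iff)
  hence "frac (real_of_int X / real n) = frac (real_of_int (X mod int n) / real n)"
    by (simp add: frac_add_of_int_right)
  also have "\<dots> = real_of_int (X mod int n) / real n"
  proof (rule iffD2[OF frac_eq])
    have "0 \<le> X mod int n" "X mod int n < int n" using assms by auto
    hence "0 \<le> real_of_int (X mod int n)" "real_of_int (X mod int n) < real n" by linarith+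
    thus "0 \<le> real_of_int (X mod int n) / real n \<and> real_of_int (X mod int n) / real n < 1"
      using assms by (simp add: divide_less_eq)
  qed
  finally show ?thesis .
qed

lemma Qmat_entry:
  assumes "n > 0" "q > 0" "j < n" "k < n"
  shows "Qmat n a q $$ (j,k) = Gf n (q powr (-1 / real n)) (a * int (j+1) - (a+1) * int (k+1))"
proof -
  let ?X = "a * int (j+1) - (a+1) * int (k+1)"
  have "Qmat n a q $$ (j,k) = q powr (- frac (real_of_int ?X / real n))"
    unfolding Qmat_def using assms(3,4) by (subst index_mat) simp_all
  also have "\<dots> = q powr (- (real_of_int (?X mod int n) / real n))"
    by (simp only: frac_div_int[OF assms(1)])
  also have "\<dots> = q powr ((-1 / real n) * real (nat (?X mod int n)))"
    using assms(1) by simp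
  also have "\<dots> = (q powr (-1 / real n)) powr real (nat (?X mod int n))"
    by (simp add: powr_powr)
  also have "\<dots> = (q powr (-1 / real n)) ^ nat (?X mod int n)"
    by (rule powr_realpow) (use assms in simp)
  finally show ?thesis unfolding Gf_def .
qed

lemma omega_pow:
  assumes "n > 0" "q > 0"
  shows "(q powr (-1 / real n)) ^ n = 1 / q"
proof -
  have "(q powr (-1 / real n)) ^ n = (q powr (-1 / real n)) powr real n"
    using assms by (simp add: powr_realpow)
  also have "\<dots> = q powr (-1)" using assms by (simp add: powr_powr)
  also have "\<dots> = 1 / q" using assms by (simp add: powr_minus_divide)
  finally show ?thesis .
qed




lemma sum_two_delta:
  fixes h :: "nat \<Rightarrow> real"
  assumes "i < n"
  shows "(\<Sum>k\<in>{0..<n}. (if k = i then 1 else if k = Suc i then - w else 0) * h k)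
       = h i - (if Suc i < n then w * h (Suc i) else 0)"
proof -
  have "(\<Sum>k\<in>{0..<n}. (if k = i then 1 else if k = Suc i then - w else 0) * h k)
      = (\<Sum>k\<in>{0..<n}. (if k = i then h k else 0) + (if k = Suc i then - w * h k else 0))"
    by (rule sum.cong) auto
  also have "\<dots> = h i - (if Suc i < n then w * h (Suc i) else 0)"
    using assms by (simp add: sum.distrib)
  finally show ?thesis .
qed

lemma det_D:
  assumes n: "n > 0"
  shows "det (mat n n (\<lambda>(u,v). Gf n w (int v - int u))) = (1 - w ^ n) ^ (n - 1)"
proof -
  define D where "D = mat n n (\<lambda>(u,v). Gf n w (int v - int u))"
  define L :: "real mat" where "L = mat n n (\<lambda>(i,k). if k = i then 1 else if k = Suc i then - w else 0)"
  have Dc: "D \<in> carrier_mat n n" and Lc: "L \<in> carrier_mat n n" unfolding D_def L_def by auto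
  have "upper_triangular L" unfolding upper_triangular_def L_def by auto
  hence "det L = prod_list (diag_mat L)" using det_upper_triangular[OF _ Lc] by simp
  also have "\<dots> = (\<Prod>i = 0..<n. L $$ (i, i))" using Lc by (simp add: prod_list_diag_prod)
  also have "\<dots> = 1" by (rule prod.neutral) (simp add: L_def)
  finally have detL: "det L = 1" .
  have M: "(L * D) $$ (i, v) = Gf n w (int v - int i) - (if Suc i < n then w * Gf n w (int v - int i - 1) else 0)"
    if "i < n" "v < n" for i v
  proof -
    have "(L * D) $$ (i, v) = (\<Sum>k\<in>{0..<n}. (if k = i then 1 else if k = Suc i then - w else 0) * D $$ (k, v))"
      using that Lc Dc by (simp add: scalar_prod_def L_def)
    also have "\<dots> = D $$ (i, v) - (if Suc i < n then w * D $$ (Suc i, v) else 0)"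
      by (rule sum_two_delta[OF that(1)])
    finally show ?thesis using that unfolding D_def by (cases "Suc i < n") (simp_all add: algebra_simps)
  qed
  have Mval: "(L * D) $$ (i, v) = (if i = v then (if Suc i < n then 1 - w ^ n else 1) else 0)"
    if "i < n" "v < n" "i \<le> v" for i v
  proof (cases "Suc i < n")
    case True
    have "(int v - int i) mod int n = 0 \<longleftrightarrow> i = v"
    proof
      assume "(int v - int i) mod int n = 0"
      moreover have "0 \<le> int v - int i" "int v - int i < int n" using that by auto
      ultimately show "i = v" by (simp add: mod_pos_pos_trivial)
    qed simp
    then show ?thesis using M[OF that(1,2)] True Gf_step[OF n, of w "int v - int i"]
      by (simp add: algebra_simps)
  next
    case False
    hence "i = v" using that by auto
    then show ?thesis using M[OF that(1,2)] False by (simp add: Gf_def)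
  qed
  have LDc: "L * D \<in> carrier_mat n n" using Lc Dc by simp
  have "det (L * D) = prod_list (diag_mat (L * D))"
    by (rule det_lower_triangular[OF _ LDc]) (use Mval in auto)
  also have "\<dots> = (\<Prod>i = 0..<n. (L * D) $$ (i, i))"
    using Lc by (simp add: prod_list_diag_prod)
  also have "\<dots> = (\<Prod>i = 0..<n. (if Suc i < n then 1 - w ^ n else 1))"
    by (rule prod.cong) (use Mval in auto)
  also have "\<dots> = (1 - w ^ n) ^ (n - 1)"
  proof -
    have "{0..<n} = insert (n - 1) {0..<n-1}" using n by auto
    hence "(\<Prod>i = 0..<n. (if Suc i < n then 1 - w ^ n else (1::real))) =
           (\<Prod>i = 0..<n-1. (if Suc i < n then 1 - w ^ n else 1))"
      using n by simp
    also have "\<dots> = (\<Prod>i = 0..<n-1. 1 - w ^ n)" by (rule prod.cong) auto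
    finally show ?thesis by simp
  qed
  finally show ?thesis using det_mult[OF Lc Dc] detL unfolding D_def by simp
qed




lemma det_perm_rows_cols:
  fixes D :: "'a :: comm_ring_1 mat"
  assumes p: "p permutes {0..<n}" and s: "s permutes {0..<n}" and D: "D \<in> carrier_mat n n"
  shows "det (mat n n (\<lambda>(j,k). D $$ (p j, s k))) = of_int (sign p) * of_int (sign s) * det D"
proof -
  have pn: "p j < n" if "j < n" for j using permutes_in_image[OF p] that by simp
  have sn: "s j < n" if "j < n" for j using permutes_in_image[OF s] that by simp
  define A where "A = mat n n (\<lambda>(i,k). D $$ (i, s k))"
  have Ac: "A \<in> carrier_mat n n" unfolding A_def by simp
  have "mat n n (\<lambda>(j,k). D $$ (p j, s k)) = mat n n (\<lambda>(j,k). A $$ (p j, k))"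
    by (rule eq_matI) (auto simp: A_def pn)
  hence 1: "det (mat n n (\<lambda>(j,k). D $$ (p j, s k))) = of_int (sign p) * det A"
    using det_permute_rows[OF Ac p] by simp
  have "transpose_mat A = mat n n (\<lambda>(k,i). transpose_mat D $$ (s k, i))"
    by (rule eq_matI) (use D in \<open>auto simp: A_def sn\<close>)
  hence "det (transpose_mat A) = of_int (sign s) * det (transpose_mat D)"
    using det_permute_rows[of "transpose_mat D" n s] D s by simp
  hence "det A = of_int (sign s) * det D"
    using det_transpose[OF Ac] det_transpose[OF D] by simp
  with 1 show ?thesis by simp
qed

lemma noncoprime_witness:
  assumes n: "n > 0" and nc: "\<not> coprime x (int n)"
  obtains j where "0 < j" "j < n" "int n dvd x * int j"
proof -
  define d where "d = gcd x (int n)"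
  have d0: "d > 0" using n unfolding d_def by simp
  have "d \<noteq> 1" using nc unfolding d_def by (simp add: coprime_iff_gcd_eq_1)
  hence d1: "d > 1" using d0 by simp
  obtain x' where x': "x = d * x'" unfolding d_def by (meson dvd_def gcd_dvd1)
  obtain n' where n': "int n = d * n'" unfolding d_def by (meson dvd_def gcd_dvd2)
  have n'0: "n' > 0" using n' d0 n by (metis of_nat_0_less_iff pos_imp_zdiv_pos_iff zero_less_mult_pos)
  have n'n: "n' < int n" using n' d1 n'0 by (simp add: mult_less_cancel_right1)
  show ?thesis
  proof (rule that[of "nat n'"])
    show "0 < nat n'" using n'0 by simp
    show "nat n' < n" using n'n n'0 by (simp add: nat_less_iff)
    have "x * int (nat n') = x' * int n" using x' n' n'0 by (simp add: algebra_simps)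
    thus "int n dvd x * int (nat n')" by simp
  qed
qed




lemma jacobi_mult_coprime:
  assumes "odd n" "coprime x (int n)" "coprime y (int n)"
  shows "jacobi x n * jacobi y n = jacobi (x * y) n"
proof -
  have px: "permutation (mulperm n x 0)" using mulperm_permutes[OF assms(2)] permutes_imp_permutation by blast
  have py: "permutation (mulperm n y 0)" using mulperm_permutes[OF assms(3)] permutes_imp_permutation by blast
  have "mulperm n x 0 \<circ> mulperm n y 0 = mulperm n (x * y) 0" by (simp add: mulperm_compose)
  hence "sign (mulperm n (x * y) 0) = sign (mulperm n x 0) * sign (mulperm n y 0)"
    using sign_compose[OF px py] by simp
  moreover have "coprime (x * y) (int n)" using assms by simp
  ultimately show ?thesis using sign_mulperm[OF assms(1,2)] sign_mulperm[OF assms(1,3)]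
      sign_mulperm[OF assms(1) \<open>coprime (x * y) (int n)\<close>] by simp
qed

lemma det_Q_coprime:
  assumes n: "n > 0" "odd n" and q: "q > 0" and cop: "coprime (a * (a+1)) (int n)"
  shows "det (Qmat n a q) = real_of_int (jacobi (a * (a+1)) n) * (1 - 1 / q) ^ (n - 1)"
proof -
  define w where "w = q powr (-1 / real n)"
  define D where "D = mat n n (\<lambda>(u,v). Gf n w (int v - int u))"
  define p where "p = mulperm n (-a) 1"
  define s where "s = mulperm n (-(a+1)) 0"
  have ca: "coprime (-a) (int n)" using cop by auto
  have "coprime (a+1) (int n)" using cop by auto
  hence cb: "coprime (-(a+1)) (int n)" by (simp only: coprime_minus_left_iff)
  have pp: "p permutes {0..<n}" unfolding p_def by (rule mulperm_permutes[OF ca])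
  have sp: "s permutes {0..<n}" unfolding s_def by (rule mulperm_permutes[OF cb])
  have Dc: "D \<in> carrier_mat n n" unfolding D_def by simp
  have eq: "Qmat n a q = mat n n (\<lambda>(j,k). D $$ (p j, s k))"
  proof (rule eq_matI)
    fix j k assume jk: "j < dim_row (mat n n (\<lambda>(j,k). D $$ (p j, s k)))"
      "k < dim_col (mat n n (\<lambda>(j,k). D $$ (p j, s k)))"
    hence j: "j < n" and k: "k < n" by auto
    have pj: "p j < n" and sk: "s k < n" unfolding p_def s_def using mulperm_lt j k by auto
    have "(int (s k) - int (p j)) mod int n = (a * int (j+1) - (a+1) * int (k+1)) mod int n"
    proof -
      have "int (s k) = (-(a+1) * int k + 0) mod int n" unfolding s_def mulperm_def using k by simp
      moreover have "int (p j) = (-a * int j + 1) mod int n" unfolding p_def mulperm_def using j by simp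
      ultimately have "(int (s k) - int (p j)) mod int n = ((-(a+1) * int k + 0) - (-a * int j + 1)) mod int n"
        by (simp add: mod_diff_eq)
      also have "(-(a+1) * int k + 0) - (-a * int j + 1) = a * int (j+1) - (a+1) * int (k+1)"
        by (simp add: algebra_simps)
      finally show ?thesis .
    qed
    hence "Gf n w (int (s k) - int (p j)) = Gf n w (a * int (j+1) - (a+1) * int (k+1))"
      by (rule Gf_mod)
    thus "Qmat n a q $$ (j, k) = mat n n (\<lambda>(j,k). D $$ (p j, s k)) $$ (j, k)"
      using Qmat_entry[OF n(1) q j k] j k pj sk unfolding D_def w_def by simp
  qed (simp_all add: Qmat_def)
  have "det (Qmat n a q) = of_int (sign p) * of_int (sign s) * det D"
    unfolding eq by (rule det_perm_rows_cols[OF pp sp Dc])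
  also have "det D = (1 - w ^ n) ^ (n - 1)" unfolding D_def by (rule det_D[OF n(1)])
  also have "w ^ n = 1 / q" unfolding w_def by (rule omega_pow[OF n(1) q])
  also have "sign p = jacobi (-a) n" unfolding p_def by (rule sign_mulperm[OF n(2) ca])
  also have "sign s = jacobi (-(a+1)) n" unfolding s_def by (rule sign_mulperm[OF n(2) cb])
  also have "real_of_int (jacobi (-a) n) * real_of_int (jacobi (-(a+1)) n) = real_of_int (jacobi (a * (a+1)) n)"
    using jacobi_mult_coprime[OF n(2) ca cb] by (metis of_int_mult minus_mult_minus)
  finally show ?thesis .
qed

lemma mod_add_dvd: "(m::int) dvd e \<Longrightarrow> (x + e) mod m = x mod m"
  by (auto elim!: dvdE)

lemma det_Q_noncoprime:
  assumes n: "n > 0" and q: "q > 0" and nc: "\<not> coprime (a * (a+1)) (int n)"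
  shows "det (Qmat n a q) = 0"
proof -
  have Qc: "Qmat n a q \<in> carrier_mat n n" unfolding Qmat_def by simp
  define w where "w = q powr (-1 / real n)"
  have ent: "Qmat n a q $$ (j,k) = Gf n w (a * int (j+1) - (a+1) * int (k+1))" if "j < n" "k < n" for j k
    unfolding w_def by (rule Qmat_entry[OF n q that])
  consider "\<not> coprime a (int n)" | "\<not> coprime (a+1) (int n)" using nc by auto
  then show ?thesis
  proof cases
    case 1
    obtain j where j: "0 < j" "j < n" "int n dvd a * int j" using noncoprime_witness[OF n 1] by blast
    have "row (Qmat n a q) 0 = row (Qmat n a q) j"
    proof (rule eq_vecI)
      fix k assume "k < dim_vec (row (Qmat n a q) j)"
      hence k: "k < n" using Qc by simp
      have "(a * int (0+1) - (a+1) * int (k+1)) mod int n = (a * int (j+1) - (a+1) * int (k+1)) mod int n"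
      proof -
        have e: "a * int (j+1) - (a+1) * int (k+1) = (a * int (0+1) - (a+1) * int (k+1)) + a * int j"
          by (simp add: algebra_simps)
        show ?thesis unfolding e by (simp only: mod_add_dvd[OF j(3)])
      qed
      hence "Gf n w (a * int (0+1) - (a+1) * int (k+1)) = Gf n w (a * int (j+1) - (a+1) * int (k+1))"
        by (rule Gf_mod)
      moreover have "row (Qmat n a q) 0 $ k = Qmat n a q $$ (0, k)" using k n Qc by simp
      moreover have "row (Qmat n a q) j $ k = Qmat n a q $$ (j, k)" using k j Qc by simp
      ultimately show "row (Qmat n a q) 0 $ k = row (Qmat n a q) j $ k"
        using ent[of 0 k] ent[of j k] k j n by simp
    qed (use Qc in simp)
    thus ?thesis using det_identical_rows[OF Qc, of 0 j] j n by simp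
  next
    case 2
    obtain j where j: "0 < j" "j < n" "int n dvd (a+1) * int j" using noncoprime_witness[OF n 2] by blast
    have Tc: "transpose_mat (Qmat n a q) \<in> carrier_mat n n" using Qc by simp
    have "row (transpose_mat (Qmat n a q)) 0 = row (transpose_mat (Qmat n a q)) j"
    proof (rule eq_vecI)
      fix k assume "k < dim_vec (row (transpose_mat (Qmat n a q)) j)"
      hence k: "k < n" using Qc by simp
      have "(a * int (k+1) - (a+1) * int (0+1)) mod int n = (a * int (k+1) - (a+1) * int (j+1)) mod int n"
      proof -
        have e: "a * int (k+1) - (a+1) * int (0+1) = (a * int (k+1) - (a+1) * int (j+1)) + (a+1) * int j"
          by (simp add: algebra_simps)
        show ?thesis unfolding e by (simp only: mod_add_dvd[OF j(3)])
      qed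
      hence "Gf n w (a * int (k+1) - (a+1) * int (0+1)) = Gf n w (a * int (k+1) - (a+1) * int (j+1))"
        by (rule Gf_mod)
      moreover have "row (transpose_mat (Qmat n a q)) 0 $ k = Qmat n a q $$ (k, 0)" using k n Qc by simp
      moreover have "row (transpose_mat (Qmat n a q)) j $ k = Qmat n a q $$ (k, j)" using k j Qc by simp
      ultimately show "row (transpose_mat (Qmat n a q)) 0 $ k = row (transpose_mat (Qmat n a q)) j $ k"
        using ent[of k 0] ent[of k j] k j n by simp
    qed (use Qc in simp)
    hence "det (transpose_mat (Qmat n a q)) = 0" using det_identical_rows[OF Tc, of 0 j] j n by simp
    thus ?thesis using det_transpose[OF Qc] by simp
  qed
qed

lemma det_Q:
  assumes n: "n > 0" "odd n" and q: "q > 0"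
  shows "det (Qmat n a q) = real_of_int (jacobi (a * (a+1)) n) * (1 - 1 / q) ^ (n - 1)"
proof (cases "coprime (a * (a+1)) (int n)")
  case True
  then show ?thesis using det_Q_coprime[OF n q] by blast
next
  case False
  then show ?thesis using det_Q_noncoprime[OF n(1) q False] jacobi_not_coprime[OF n(1) False] by simp
qed




lemma single_sum:
  fixes f :: "nat \<Rightarrow> real"
  assumes n: "n > 0"
  shows "(\<Sum>r\<in>{0..<n}. f r * of_bool (int n dvd int r - K)) = f (nat (K mod int n))"
proof -
  have "(\<Sum>r\<in>{0..<n}. f r * of_bool (int n dvd int r - K)) =
        (\<Sum>r\<in>{0..<n}. if r = nat (K mod int n) then f r else 0)"
  proof (rule sum.cong)
    fix r assume r: "r \<in> {0..<n}"
    have "int n dvd int r - K \<longleftrightarrow> int r mod int n = K mod int n"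
      by (simp add: mod_eq_dvd_iff)
    also have "int r mod int n = int r" using r by simp
    also have "int r = K mod int n \<longleftrightarrow> r = nat (K mod int n)" using n by auto
    finally show "f r * of_bool (int n dvd int r - K) = (if r = nat (K mod int n) then f r else 0)"
      by simp
  qed simp
  also have "\<dots> = f (nat (K mod int n))"
    using n by (simp add: sum.delta' nat_less_iff)
  finally show ?thesis .
qed

lemma dvd_mod_cong: "x mod (m::int) = y mod m \<Longrightarrow> (m dvd x) = (m dvd y)"
  by (simp add: dvd_eq_mod_eq_0)

lemma QF_entry:
  assumes n: "n > 0" "odd n" and q: "q > 0" and cop: "coprime (a * (a+1)) (int n)"
    and j: "j < n" and k: "k < n"
  shows "(Qmat n a q * mat n n (\<lambda>(j,k). fent n a q (j+1) (k+1))) $$ (j,k)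
       = (if j = k then 1 - 1 / q else 0)"
proof -
  define w where "w = q powr (-1 / real n)"
  define b where "b = a + 1"
  define rho where "rho = mulperm n b b"
  define A where "A = a * int (j+1)"
  define K where "K = a * int (k+1)"
  define h where "h = (\<lambda>r::nat. Gf n w (A - int r) * (of_bool (int n dvd int r - K) - w * of_bool (int n dvd int r - (K + 1))))"
  have cb: "coprime b (int n)" using cop unfolding b_def by simp
  have ca: "coprime a (int n)" using cop by simp
  have rp: "rho permutes {0..<n}" unfolding rho_def by (rule mulperm_permutes[OF cb])
  have rho_mod: "int (rho l) mod int n = (b * int (l+1)) mod int n" if "l < n" for l
    using that unfolding rho_def mulperm_def by (simp add: algebra_simps)
  have "(Qmat n a q * mat n n (\<lambda>(j,k). fent n a q (j+1) (k+1))) $$ (j,k)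
      = (\<Sum>l\<in>{0..<n}. Qmat n a q $$ (j, l) * fent n a q (l+1) (k+1))"
    using j k by (simp add: scalar_prod_def Qmat_def)
  also have "\<dots> = (\<Sum>l\<in>{0..<n}. h (rho l))"
  proof (rule sum.cong)
    fix l assume "l \<in> {0..<n}"
    hence l: "l < n" by simp
    have m1: "(A - b * int (l+1)) mod int n = (A - int (rho l)) mod int n"
    proof -
      have "(A - b * int (l+1)) mod int n = (A - (b * int (l+1)) mod int n) mod int n"
        by (rule mod_diff_right_eq[symmetric])
      also have "(b * int (l+1)) mod int n = int (rho l) mod int n" by (rule rho_mod[OF l, symmetric])
      also have "(A - int (rho l) mod int n) mod int n = (A - int (rho l)) mod int n"
        by (rule mod_diff_right_eq)
      finally show ?thesis .
    qed
    have m2: "(b * int (l+1) - Z) mod int n = (int (rho l) - Z) mod int n" for Z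
    proof -
      have "(b * int (l+1) - Z) mod int n = ((b * int (l+1)) mod int n - Z) mod int n"
        by (rule mod_diff_left_eq[symmetric])
      also have "(b * int (l+1)) mod int n = int (rho l) mod int n" by (rule rho_mod[OF l, symmetric])
      also have "(int (rho l) mod int n - Z) mod int n = (int (rho l) - Z) mod int n"
        by (rule mod_diff_left_eq)
      finally show ?thesis .
    qed
    have 1: "Qmat n a q $$ (j, l) = Gf n w (A - int (rho l))"
      unfolding Qmat_entry[OF n(1) q j l] w_def[symmetric] A_def[symmetric] b_def[symmetric]
      by (rule Gf_mod[OF m1])
    have 2: "(int n dvd b * int (l+1) - K) = (int n dvd int (rho l) - K)"
      by (rule dvd_mod_cong[OF m2])
    have e3: "b * int (l+1) - K - 1 = b * int (l+1) - (K + 1)" by simp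
    have 3: "(int n dvd b * int (l+1) - K - 1) = (int n dvd int (rho l) - (K + 1))"
      unfolding e3 by (rule dvd_mod_cong[OF m2])
    have "fent n a q (l+1) (k+1) = of_bool (int n dvd int (rho l) - K) - w * of_bool (int n dvd int (rho l) - (K + 1))"
      unfolding fent_def w_def K_def[symmetric] using 2 3 unfolding b_def by simp
    thus "Qmat n a q $$ (j, l) * fent n a q (l+1) (k+1) = h (rho l)"
      unfolding h_def 1 by simp
  qed simp
  also have "\<dots> = (\<Sum>r\<in>{0..<n}. h r)"
    by (rule sum.reindex_bij_betw[OF permutes_imp_bij[OF rp]])
  also have "\<dots> = (\<Sum>r\<in>{0..<n}. Gf n w (A - int r) * of_bool (int n dvd int r - K))
      - w * (\<Sum>r\<in>{0..<n}. Gf n w (A - int r) * of_bool (int n dvd int r - (K + 1)))"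
  proof -
    have "(\<Sum>r\<in>{0..<n}. h r) = (\<Sum>r\<in>{0..<n}. Gf n w (A - int r) * of_bool (int n dvd int r - K)
        - w * (Gf n w (A - int r) * of_bool (int n dvd int r - (K + 1))))"
      unfolding h_def by (intro sum.cong refl) (simp only: right_diff_distrib mult.left_commute)
    also have "\<dots> = (\<Sum>r\<in>{0..<n}. Gf n w (A - int r) * of_bool (int n dvd int r - K))
      - w * (\<Sum>r\<in>{0..<n}. Gf n w (A - int r) * of_bool (int n dvd int r - (K + 1)))"
      by (simp only: sum_subtractf sum_distrib_left)
    finally show ?thesis .
  qed
  also have "\<dots> = Gf n w (A - K) - w * Gf n w (A - K - 1)"
  proof -
    have "(\<Sum>r\<in>{0..<n}. Gf n w (A - int r) * of_bool (int n dvd int r - K)) = Gf n w (A - int (nat (K mod int n)))"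
      by (rule single_sum[OF n(1)])
    also have "\<dots> = Gf n w (A - K)"
    proof (rule Gf_mod)
      have "int (nat (K mod int n)) = K mod int n" using n(1) by simp
      thus "(A - int (nat (K mod int n))) mod int n = (A - K) mod int n" by (simp only: mod_diff_right_eq)
    qed
    finally have s1: "(\<Sum>r\<in>{0..<n}. Gf n w (A - int r) * of_bool (int n dvd int r - K)) = Gf n w (A - K)" .
    have "(\<Sum>r\<in>{0..<n}. Gf n w (A - int r) * of_bool (int n dvd int r - (K + 1))) = Gf n w (A - int (nat ((K + 1) mod int n)))"
      by (rule single_sum[OF n(1)])
    also have "\<dots> = Gf n w (A - K - 1)"
    proof (rule Gf_mod)
      have "int (nat ((K + 1) mod int n)) = (K + 1) mod int n" using n(1) by simp
      hence "(A - int (nat ((K + 1) mod int n))) mod int n = (A - (K + 1)) mod int n" by (simp only: mod_diff_right_eq)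
      thus "(A - int (nat ((K + 1) mod int n))) mod int n = (A - K - 1) mod int n" by (simp add: diff_diff_eq)
    qed
    finally have s2: "(\<Sum>r\<in>{0..<n}. Gf n w (A - int r) * of_bool (int n dvd int r - (K + 1))) = Gf n w (A - K - 1)" .
    show ?thesis using s1 s2 by simp
  qed
  also have "\<dots> = (if (A - K) mod int n = 0 then 1 - w ^ n else 0)"
    using Gf_step[OF n(1), of w "A - K"] by simp
  also have "w ^ n = 1 / q" unfolding w_def by (rule omega_pow[OF n(1) q])
  also have "((A - K) mod int n = 0) = (j = k)"
  proof -
    have "A - K = a * (int j - int k)" unfolding A_def K_def by (simp add: algebra_simps)
    hence "((A - K) mod int n = 0) = (int n dvd a * (int j - int k))" by (simp add: dvd_eq_mod_eq_0)
    also have "\<dots> = (int n dvd (int j - int k))"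
      using ca by (simp add: coprime_dvd_mult_right_iff coprime_commute)
    also have "\<dots> = (j = k)"
    proof
      assume d: "int n dvd int j - int k"
      show "j = k"
      proof (rule ccontr)
        assume "j \<noteq> k"
        hence nz: "int j - int k \<noteq> 0" by simp
        have "\<bar>int n\<bar> \<le> \<bar>int j - int k\<bar>" by (rule dvd_imp_le_int[OF nz d])
        thus False using j k by linarith
      qed
    qed simp
    finally show ?thesis .
  qed
  finally show ?thesis .
qed

lemma Q_inverse:
  assumes n: "n > 0" "odd n" and q: "q > 0" "q \<noteq> 1" and cop: "coprime (a * (a+1)) (int n)"
  shows "Qmat n a q * Qinv n a q = 1\<^sub>m n" "Qinv n a q * Qmat n a q = 1\<^sub>m n"
proof -
  define F where "F = mat n n (\<lambda>(j,k). fent n a q (j+1) (k+1))"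
  have Qc: "Qmat n a q \<in> carrier_mat n n" unfolding Qmat_def by simp
  have Fc: "F \<in> carrier_mat n n" unfolding F_def by simp
  have Ic: "Qinv n a q \<in> carrier_mat n n" unfolding Qinv_def by simp
  have nz: "1 - 1 / q \<noteq> 0" using q by simp
  have "Qmat n a q * Qinv n a q = (1 / (1 - 1 / q)) \<cdot>\<^sub>m (Qmat n a q * F)"
    unfolding Qinv_def F_def[symmetric] by (rule mult_smult_distrib[OF Qc Fc])
  also have "\<dots> = 1\<^sub>m n"
  proof (rule eq_matI)
    fix j k assume "j < dim_row (1\<^sub>m n)" "k < dim_col (1\<^sub>m n)"
    hence j: "j < n" and k: "k < n" by auto
    have "((1 / (1 - 1 / q)) \<cdot>\<^sub>m (Qmat n a q * F)) $$ (j, k) = (1 / (1 - 1 / q)) * (Qmat n a q * F) $$ (j, k)"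
      using j k Qc Fc by simp
    also have "\<dots> = (1 / (1 - 1 / q)) * (if j = k then 1 - 1 / q else 0)"
      unfolding F_def by (subst QF_entry[OF n q(1) cop j k]) simp
    also have "\<dots> = 1\<^sub>m n $$ (j, k)" using nz q j k by simp
    finally show "((1 / (1 - 1 / q)) \<cdot>\<^sub>m (Qmat n a q * F)) $$ (j, k) = 1\<^sub>m n $$ (j, k)" .
  qed (use Qc Fc in auto)
  finally show 1: "Qmat n a q * Qinv n a q = 1\<^sub>m n" .
  show "Qinv n a q * Qmat n a q = 1\<^sub>m n" by (rule mat_mult_left_right_inverse[OF Qc Ic 1])
qed

theorem proposition2p1:
  fixes n :: nat and a :: int and q :: real
  assumes "n > 0" and "odd n" and "q > 0" and "q \<noteq> 1"
  shows "det (Qmat n a q) = real_of_int (jacobi (a * (a+1)) n) * (1 - 1 / q) ^ (n - 1)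
     \<and> (gcd (a * (a+1)) (int n) = 1 \<longrightarrow>
          Qmat n a q * Qinv n a q = 1\<^sub>m n \<and> Qinv n a q * Qmat n a q = 1\<^sub>m n)"
proof (intro conjI impI)
  show "det (Qmat n a q) = real_of_int (jacobi (a * (a+1)) n) * (1 - 1 / q) ^ (n - 1)"
    by (rule det_Q[OF assms(1,2,3)])
next
  assume "gcd (a * (a+1)) (int n) = 1"
  hence cop: "coprime (a * (a+1)) (int n)" by (simp add: coprime_iff_gcd_eq_1)
  show "Qmat n a q * Qinv n a q = 1\<^sub>m n" by (rule Q_inverse(1)[OF assms cop])
  show "Qinv n a q * Qmat n a q = 1\<^sub>m n" by (rule Q_inverse(2)[OF assms cop])
qed


end
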